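(* For any $g\ge2$, $n\ge1$ and any $a_1,\dots,a_n\in\mathbb{Z}_{\ge0}$, $$P_{g,n+1}(a_1,\dots,a_n,1)-P_{g,n+1}(a_1,\dots,a_n,0)=P_{g,n}(a_1,\dots,a_n)\cdot\Big(4\sum_{i=1}^na_i-8g+10-2n\Big).$$
   Context: For $g\ge2$, $m\ge1$, $$P_{g,m}(a_1,\dots,a_m):=\sum_{k=1}^m\frac{(-1)^k(2g-3+k)!}{k!}\sum_{(I_1,\dots,I_k)}\ \sum_{\substack{d_1,\dots,d_k\in\mathbb{Z}_{\ge0}\\ d_1+\cdots+d_k=g-2+m}}\prod_{j=1}^k\binom{2a_{[I_j]}+1}{2d_j}\prod_{i=1}^{|I_j|-1}(2d_j+1-2i),$$ where $(I_1,\dots,I_k)$ runs over ordered $k$-tuples of nonempty pairwise disjoint subsets of $\{1,\dots,m\}$ with union $\{1,\dots,m\}$, $a_{[I]}:=\sum_{\ell\in I}a_\ell$, and $\binom{x}{r}$ is the usual binomial coefficient (zero if $r>x$). *)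

theory Defs
  imports Complex_Main
begin

definition ordered_set_partitions :: "nat \<Rightarrow> nat \<Rightarrow> nat set list set" where
  "ordered_set_partitions m k =
     {Is. length Is = k \<and> (\<forall>I\<in>set Is. I \<noteq> {})
        \<and> (\<forall>i<k. \<forall>j<k. i \<noteq> j \<longrightarrow> Is ! i \<inter> Is ! j = {})
        \<and> \<Union>(set Is) = {1..m}}"

definition weak_compositions :: "nat \<Rightarrow> nat \<Rightarrow> nat list set" where
  "weak_compositions k s = {ds. length ds = k \<and> sum_list ds = s}"

definition asum :: "(nat \<Rightarrow> nat) \<Rightarrow> nat set \<Rightarrow> nat" where
  "asum a I = (\<Sum>l\<in>I. a l)"

definition P :: "nat \<Rightarrow> nat \<Rightarrow> (nat \<Rightarrow> nat) \<Rightarrow> rat" where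
  "P g m a =
    (\<Sum>k=1..m. (-1)^k * of_nat (fact (2*g - 3 + k)) / of_nat (fact k) *
      (\<Sum>Is\<in>ordered_set_partitions m k.
        \<Sum>ds\<in>weak_compositions k (g - 2 + m).
          \<Prod>j<k. of_nat ((2 * asum a (Is ! j) + 1) choose (2 * (ds ! j)))
                 * (\<Prod>i=1..card (Is ! j) - 1. of_nat (2 * (ds ! j) + 1) - 2 * of_nat i)))"

end

theory Submission
  imports Defs
begin

fun cv :: "(nat \<Rightarrow> rat) list \<Rightarrow> nat \<Rightarrow> rat" where
  "cv [] D = (if D = 0 then 1 else 0)"
| "cv (f # fs) D = (\<Sum>d\<le>D. f d * cv fs (D - d))"

lemma binom_aux: "Suc m * (N choose Suc m) = (N - m) * (N choose m)"
proof (cases N)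
  case 0 then show ?thesis by simp
next
  case (Suc N')
  then show ?thesis using Suc_times_binomial[of m N'] binomial_absorb_comp[of "Suc N'" m] by simp
qed

lemma binom_key:
  "(of_nat ((N+2) choose (m+2)) - of_nat (N choose (m+2))) * (of_nat m + 1 :: rat)
   = of_nat (N choose m) * (2 * of_nat N - of_nat m + 1)"
proof -
  have e1: "(N+2) choose (m+2) = (N choose m) + 2 * (N choose Suc m) + (N choose (m+2))"
    by (simp add: numeral_2_eq_2)
  have e2: "of_nat (Suc m) * of_nat (N choose Suc m) = (of_nat N - of_nat m) * (of_nat (N choose m) :: rat)"
  proof (cases "m \<le> N")
    case True
    have "of_nat (Suc m * (N choose Suc m)) = (of_nat ((N - m) * (N choose m)) :: rat)"
      using binom_aux by metis
    then show ?thesis using True by (simp add: of_nat_diff algebra_simps)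
  next
    case False then show ?thesis by (simp add: binomial_eq_0)
  qed
  have e3: "of_nat ((N+2) choose (m+2)) - of_nat (N choose (m+2)) = of_nat (N choose m) + 2 * (of_nat (N choose Suc m) :: rat)"
    unfolding e1 of_nat_add of_nat_mult by simp
  have alg: "\<And>x y mm nn :: rat. (mm+1)*y = (nn-mm)*x \<Longrightarrow> (x + 2*y)*(mm+1) = x*(2*nn-mm+1)"
    by (simp add: algebra_simps)
  have e2': "(of_nat m + 1) * of_nat (N choose Suc m) = (of_nat N - of_nat m) * (of_nat (N choose m) :: rat)"
    using e2 by (simp add: add.commute)
  show ?thesis unfolding e3 by (rule alg[OF e2'])
qed

lemma cv_upd_diff:
  "p < length fs \<Longrightarrow> cv (fs[p := f]) D - cv (fs[p := g]) D = cv (fs[p := (\<lambda>d. f d - g d)]) D"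
proof (induction fs arbitrary: p D)
  case Nil then show ?case by simp
next
  case (Cons h fs)
  show ?case
  proof (cases p)
    case 0 then show ?thesis by (simp add: sum_subtractf[symmetric] algebra_simps)
  next
    case (Suc q)
    then have q: "q < length fs" using Cons.prems by simp
    show ?thesis using Suc Cons.IH[OF q]
      by (simp add: sum_subtractf[symmetric] right_diff_distrib[symmetric])
  qed
qed

lemma cv_upd_zero:
  "p < length fs \<Longrightarrow> h 0 = 0 \<Longrightarrow> cv (fs[p := h]) 0 = 0"
proof (induction fs arbitrary: p)
  case Nil then show ?case by simp
next
  case (Cons f fs) then show ?case by (cases p) auto
qed

lemma cv_shift:
  "p < length fs \<Longrightarrow> h 0 = 0 \<Longrightarrow> (\<And>d. h (Suc d) = u d) \<Longrightarrow>
   cv (fs[p := h]) (Suc D) = cv (fs[p := u]) D"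
proof (induction fs arbitrary: p D)
  case Nil then show ?case by simp
next
  case (Cons f fs)
  show ?case
  proof (cases p)
    case 0 then show ?thesis using Cons.prems
      by (simp add: sum.atMost_Suc_shift del: sum.atMost_Suc)
  next
    case (Suc q)
    then have q: "q < length fs" using Cons.prems by simp
    have "cv ((f # fs)[p := h]) (Suc D) = (\<Sum>d\<le>Suc D. f d * cv (fs[q := h]) (Suc D - d))"
      using Suc by simp
    also have "\<dots> = (\<Sum>d\<le>D. f d * cv (fs[q := h]) (Suc D - d))"
      using cv_upd_zero[where h=h, OF q Cons.prems(2)] by simp
    also have "\<dots> = (\<Sum>d\<le>D. f d * cv (fs[q := u]) (D - d))"
    proof (rule sum.cong)
      fix d assume "d \<in> {..D}"
      then have "Suc D - d = Suc (D - d)" by auto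
      then show "f d * cv (fs[q := h]) (Suc D - d) = f d * cv (fs[q := u]) (D - d)"
        using Cons.IH[OF q Cons.prems(2,3)] by simp
    qed simp
    also have "\<dots> = cv ((f # fs)[p := u]) D" using Suc by simp
    finally show ?thesis .
  qed
qed

lemma sum_if0: "(\<Sum>d\<le>D. (if d = 0 then c else 0) * F d) = c * (F (0::nat) :: rat)"
  by (induction D) auto

definition ins :: "nat \<Rightarrow> 'a \<Rightarrow> 'a list \<Rightarrow> 'a list" where
  "ins p x L = take p L @ x # drop p L"

lemma cv_ins_const:
  "p \<le> length L \<Longrightarrow> cv (ins p (\<lambda>d. if d = 0 then c else 0) L) D = c * cv L D"
proof (induction L arbitrary: p D)
  case Nil then show ?case by (simp add: ins_def sum_if0)
next
  case (Cons f L)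
  show ?case
  proof (cases p)
    case 0 then show ?thesis
      by (simp add: ins_def sum_if0)
  next
    case (Suc q)
    then have q: "q \<le> length L" using Cons.prems by simp
    have "ins p (\<lambda>d. if d = 0 then c else 0) (f # L) = f # ins q (\<lambda>d. if d = 0 then c else 0) L"
      using Suc by (simp add: ins_def)
    then show ?thesis using Cons.IH[OF q] by (simp add: sum_distrib_left algebra_simps)
  qed
qed

lemma cv_weighted:
  "(\<Sum>j<length L. cv (L[j := (\<lambda>d. (L!j) d * (\<alpha> j - 2 * of_nat d))]) D)
   = cv L D * ((\<Sum>j<length L. \<alpha> j) - 2 * of_nat D)"
proof (induction L arbitrary: \<alpha> D)
  case Nil then show ?case by simp
next
  case (Cons f L)
  have IH: "\<And>E. (\<Sum>j<length L. cv (L[j := (\<lambda>d. (L!j) d * (\<alpha> (Suc j) - 2 * of_nat d))]) E)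
     = cv L E * ((\<Sum>j<length L. \<alpha> (Suc j)) - 2 * of_nat E)"
    using Cons.IH[of "\<lambda>j. \<alpha> (Suc j)"] by simp
  have "(\<Sum>j<length (f # L). cv ((f # L)[j := (\<lambda>d. ((f # L)!j) d * (\<alpha> j - 2 * of_nat d))]) D)
     = (\<Sum>d\<le>D. f d * (\<alpha> 0 - 2 * of_nat d) * cv L (D - d))
       + (\<Sum>j<length L. \<Sum>d\<le>D. f d * cv (L[j := (\<lambda>d. (L!j) d * (\<alpha> (Suc j) - 2 * of_nat d))]) (D - d))"
    by (simp add: sum.lessThan_Suc_shift del: sum.lessThan_Suc)
  also have "(\<Sum>j<length L. \<Sum>d\<le>D. f d * cv (L[j := (\<lambda>d. (L!j) d * (\<alpha> (Suc j) - 2 * of_nat d))]) (D - d))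
     = (\<Sum>d\<le>D. f d * (cv L (D - d) * ((\<Sum>j<length L. \<alpha> (Suc j)) - 2 * of_nat (D - d))))"
    by (subst sum.swap) (simp add: sum_distrib_left[symmetric] IH)
  also have "(\<Sum>d\<le>D. f d * (\<alpha> 0 - 2 * of_nat d) * cv L (D - d))
     + (\<Sum>d\<le>D. f d * (cv L (D - d) * ((\<Sum>j<length L. \<alpha> (Suc j)) - 2 * of_nat (D - d))))
     = (\<Sum>d\<le>D. f d * cv L (D - d) * ((\<Sum>j<length (f # L). \<alpha> j) - 2 * of_nat D))"
    unfolding sum.distrib[symmetric]
  proof (rule sum.cong)
    fix d assume "d \<in> {..D}"
    then have "of_nat (D - d) = (of_nat D - of_nat d :: rat)" by (simp add: of_nat_diff)
    then show "f d * (\<alpha> 0 - 2 * of_nat d) * cv L (D - d) +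
         f d * (cv L (D - d) * ((\<Sum>j<length L. \<alpha> (Suc j)) - 2 * of_nat (D - d))) =
         f d * cv L (D - d) * ((\<Sum>j<length (f # L). \<alpha> j) - 2 * of_nat D)"
      by (simp add: sum.lessThan_Suc_shift del: sum.lessThan_Suc) (simp add: algebra_simps)
  qed simp
  also have "\<dots> = cv (f # L) D * ((\<Sum>j<length (f # L). \<alpha> j) - 2 * of_nat D)"
    by (simp add: sum_distrib_right)
  finally show ?case .
qed

lemma finite_wc: "finite (weak_compositions k D)"
proof (rule finite_subset)
  show "weak_compositions k D \<subseteq> {ds. set ds \<subseteq> {..D} \<and> length ds = k}"
    by (auto simp: weak_compositions_def member_le_sum_list)
  show "finite {ds. set ds \<subseteq> {..D} \<and> length ds = k}"
    by (rule finite_lists_length_eq) simp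
qed

lemma wc_0: "weak_compositions 0 D = (if D = 0 then {[]} else {})"
  by (auto simp: weak_compositions_def)

lemma wc_Suc: "weak_compositions (Suc k) D = (\<lambda>(d,ds). d # ds) ` (SIGMA d:{..D}. weak_compositions k (D - d))"
proof (rule set_eqI)
  fix xs
  show "xs \<in> weak_compositions (Suc k) D \<longleftrightarrow> xs \<in> (\<lambda>(d,ds). d # ds) ` (SIGMA d:{..D}. weak_compositions k (D - d))"
  proof
    assume "xs \<in> weak_compositions (Suc k) D"
    then obtain d ds where "xs = d # ds" "length ds = k" "d + sum_list ds = D"
      by (cases xs) (auto simp: weak_compositions_def)
    then show "xs \<in> (\<lambda>(d,ds). d # ds) ` (SIGMA d:{..D}. weak_compositions k (D - d))"
      by (auto simp: weak_compositions_def intro!: image_eqI[where x="(d,ds)"])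
  next
    assume "xs \<in> (\<lambda>(d,ds). d # ds) ` (SIGMA d:{..D}. weak_compositions k (D - d))"
    then show "xs \<in> weak_compositions (Suc k) D"
      by (auto simp: weak_compositions_def)
  qed
qed

lemma conv_eq:
  "(\<Sum>ds\<in>weak_compositions (length fs) D. \<Prod>j<length fs. (fs!j) (ds!j)) = cv fs D"
proof (induction fs arbitrary: D)
  case Nil then show ?case by (simp add: wc_0)
next
  case (Cons f fs)
  have inj: "inj_on (\<lambda>(d,ds). d # ds) (SIGMA d:{..D}. weak_compositions (length fs) (D - d))"
    by (auto simp: inj_on_def)
  have "(\<Sum>ds\<in>weak_compositions (length (f # fs)) D. \<Prod>j<length (f # fs). ((f # fs)!j) (ds!j))
      = (\<Sum>(d,ds)\<in>(SIGMA d:{..D}. weak_compositions (length fs) (D - d)). f d * (\<Prod>j<length fs. (fs!j) (ds!j)))"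
    by (simp add: wc_Suc sum.reindex[OF inj] prod.lessThan_Suc_shift del: prod.lessThan_Suc)
       (simp add: case_prod_unfold)
  also have "\<dots> = (\<Sum>d\<le>D. f d * cv fs (D - d))"
    by (subst sum.Sigma[symmetric]) (auto simp: finite_wc sum_distrib_left[symmetric] Cons.IH)
  finally show ?case by simp
qed

definition phi :: "(nat \<Rightarrow> nat) \<Rightarrow> nat set \<Rightarrow> nat \<Rightarrow> rat" where
  "phi a I d = of_nat ((2 * asum a I + 1) choose (2 * d)) * (\<Prod>i=1..card I - 1. of_nat (2 * d + 1) - 2 * of_nat i)"

definition w :: "nat \<Rightarrow> nat \<Rightarrow> rat" where
  "w g k = (-1)^k * of_nat (fact (2*g - 3 + k)) / of_nat (fact k)"

definition T :: "(nat \<Rightarrow> nat) \<Rightarrow> nat \<Rightarrow> nat \<Rightarrow> nat \<Rightarrow> rat" where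
  "T a m k D = (\<Sum>Is\<in>ordered_set_partitions m k. cv (map (phi a) Is) D)"

lemma P_eq: "P g m a = (\<Sum>k=1..m. w g k * T a m k (g - 2 + m))"
  unfolding P_def w_def T_def
proof (rule sum.cong[OF refl], rule arg_cong[where f="\<lambda>x. _ * x"], rule sum.cong[OF refl])
  fix k Is assume "Is \<in> ordered_set_partitions m k"
  then have len: "length Is = k" by (simp add: ordered_set_partitions_def)
  show "(\<Sum>ds\<in>weak_compositions k (g - 2 + m).
          \<Prod>j<k. of_nat ((2 * asum a (Is ! j) + 1) choose (2 * (ds ! j)))
                 * (\<Prod>i=1..card (Is ! j) - 1. of_nat (2 * (ds ! j) + 1) - 2 * of_nat i))
        = cv (map (phi a) Is) (g - 2 + m)"
    using conv_eq[of "map (phi a) Is" "g - 2 + m"] len by (simp add: phi_def)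
qed

lemma set_nth_image: "set xs = (\<lambda>i. xs!i) ` {..<length xs}"
  by (auto simp: in_set_conv_nth)

lemma osp_iff: "Is \<in> ordered_set_partitions m k \<longleftrightarrow>
   length Is = k \<and> (\<forall>i<k. Is!i \<noteq> {}) \<and> (\<forall>i<k. \<forall>j<k. i \<noteq> j \<longrightarrow> Is!i \<inter> Is!j = {})
   \<and> (\<forall>i<k. Is!i \<subseteq> {1..m}) \<and> (\<forall>x\<in>{1..m}. \<exists>i<k. x \<in> Is!i)"
proof -
  have a: "(\<forall>I\<in>set Is. I \<noteq> {}) \<longleftrightarrow> (\<forall>i<length Is. Is!i \<noteq> {})"
    by (auto simp: in_set_conv_nth)
  have b: "(\<Union>(set Is) = {1..m}) \<longleftrightarrow> (\<forall>i<length Is. Is!i \<subseteq> {1..m}) \<and> (\<forall>x\<in>{1..m}. \<exists>i<length Is. x \<in> Is!i)"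
  proof
    assume h: "\<Union>(set Is) = {1..m}"
    show "(\<forall>i<length Is. Is!i \<subseteq> {1..m}) \<and> (\<forall>x\<in>{1..m}. \<exists>i<length Is. x \<in> Is!i)"
    proof
      show "\<forall>i<length Is. Is!i \<subseteq> {1..m}" using h nth_mem by blast
      show "\<forall>x\<in>{1..m}. \<exists>i<length Is. x \<in> Is!i"
      proof
        fix x assume "x \<in> {1..m}"
        then obtain I where "I \<in> set Is" "x \<in> I" using h by blast
        then show "\<exists>i<length Is. x \<in> Is!i" by (metis in_set_conv_nth)
      qed
    qed
  next
    assume h: "(\<forall>i<length Is. Is!i \<subseteq> {1..m}) \<and> (\<forall>x\<in>{1..m}. \<exists>i<length Is. x \<in> Is!i)"
    show "\<Union>(set Is) = {1..m}"
    proof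
      show "\<Union>(set Is) \<subseteq> {1..m}"
      proof
        fix x assume "x \<in> \<Union>(set Is)"
        then obtain i where "i < length Is" "x \<in> Is!i" by (auto simp: in_set_conv_nth)
        then show "x \<in> {1..m}" using h by blast
      qed
      show "{1..m} \<subseteq> \<Union>(set Is)" using h by (fastforce simp: in_set_conv_nth)
    qed
  qed
  show ?thesis unfolding ordered_set_partitions_def mem_Collect_eq a b by auto
qed

lemma finite_osp: "finite (ordered_set_partitions m k)"
proof (rule finite_subset)
  show "ordered_set_partitions m k \<subseteq> {Is. set Is \<subseteq> Pow {1..m} \<and> length Is = k}"
    by (auto simp: ordered_set_partitions_def)
  show "finite {Is. set Is \<subseteq> Pow {1..m} \<and> length Is = k}"
    by (rule finite_lists_length_eq) simp
qed

lemma length_ins[simp]: "length (ins p x L) = Suc (length L)"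
  by (simp add: ins_def)

lemma nth_ins: "p \<le> length L \<Longrightarrow> ins p x L ! j = (if j < p then L!j else if j = p then x else L!(j - 1))"
  by (auto simp: ins_def nth_append min_def)

lemma osp_nth_sub: "Js \<in> ordered_set_partitions n k \<Longrightarrow> i < k \<Longrightarrow> Js!i \<subseteq> {1..n}"
  by (auto simp: osp_iff)

lemma osp_notin: "Js \<in> ordered_set_partitions n k \<Longrightarrow> i < k \<Longrightarrow> Suc n \<notin> Js!i"
  using osp_nth_sub by fastforce

lemma ins_in_osp:
  assumes Js: "Js \<in> ordered_set_partitions n (k - 1)" and p: "p < k"
  shows "ins p {Suc n} Js \<in> ordered_set_partitions (Suc n) k"
proof -
  have len: "length Js = k - 1" using Js by (simp add: osp_iff)
  have pl: "p \<le> length Js" using len p by simp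
  have k: "Suc (k - 1) = k" using p by simp
  note J = Js[unfolded osp_iff]
  show ?thesis
    unfolding osp_iff
  proof (intro conjI allI impI ballI)
    show "length (ins p {Suc n} Js) = k" using len k by simp
  next
    fix i assume "i < k" then show "ins p {Suc n} Js ! i \<noteq> {}"
      using J pl p by (auto simp: nth_ins)
  next
    fix i j assume "i < k" "j < k" "i \<noteq> j"
    then show "ins p {Suc n} Js ! i \<inter> ins p {Suc n} Js ! j = {}"
      using J pl p osp_notin[OF Js] by (simp add: nth_ins)
  next
    fix i assume i: "i < k"
    consider "i < p" | "i = p" | "i > p" by linarith
    then show "ins p {Suc n} Js ! i \<subseteq> {1..Suc n}"
      using osp_nth_sub[OF Js, of i] osp_nth_sub[OF Js, of "i-1"] i pl p len
    proof cases
      case 3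
      then have "i - 1 < k - 1" using i by linarith
      then show ?thesis using 3 osp_nth_sub[OF Js, of "i-1"] pl by (auto simp: nth_ins)
    qed (auto simp: nth_ins)
  next
    fix x assume x: "x \<in> {1..Suc n}"
    show "\<exists>i<k. x \<in> ins p {Suc n} Js ! i"
    proof (cases "x = Suc n")
      case True then show ?thesis using p pl by (auto simp: nth_ins intro!: exI[of _ p])
    next
      case False
      then have "x \<in> {1..n}" using x by auto
      then obtain i where i: "i < k - 1" "x \<in> Js!i" using J by blast
      show ?thesis
      proof (cases "i < p")
        case True then show ?thesis using i p pl by (auto simp: nth_ins intro!: exI[of _ i])
      next
        case False then show ?thesis using i p pl by (auto simp: nth_ins intro!: exI[of _ "Suc i"])
      qed
    qed
  qed
qed

lemma upd_in_osp:
  assumes Js: "Js \<in> ordered_set_partitions n k" and j: "j < k"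
  shows "Js[j := insert (Suc n) (Js!j)] \<in> ordered_set_partitions (Suc n) k"
proof -
  note J = Js[unfolded osp_iff]
  show ?thesis
    unfolding osp_iff
  proof (intro conjI allI impI ballI)
    show "length (Js[j := insert (Suc n) (Js!j)]) = k" using J by simp
  next
    fix i assume "i < k" then show "Js[j := insert (Suc n) (Js!j)] ! i \<noteq> {}"
      using J by (cases "i = j") auto
  next
    fix i i' assume "i < k" "i' < k" "i \<noteq> i'"
    then show "Js[j := insert (Suc n) (Js!j)] ! i \<inter> Js[j := insert (Suc n) (Js!j)] ! i' = {}"
      using J osp_notin[OF Js] j by (auto simp: nth_list_update)
  next
    fix i assume i: "i < k"
    have s1: "Js!i \<subseteq> {1..Suc n}" "Js!j \<subseteq> {1..Suc n}"
      using osp_nth_sub[OF Js, of i] osp_nth_sub[OF Js, of j] i j by auto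
    have l: "length Js = k" using J by simp
    show "Js[j := insert (Suc n) (Js!j)] ! i \<subseteq> {1..Suc n}"
      using s1 i l by (cases "i = j") auto
  next
    fix x assume x: "x \<in> {1..Suc n}"
    show "\<exists>i<k. x \<in> Js[j := insert (Suc n) (Js!j)] ! i"
    proof (cases "x = Suc n")
      case True then show ?thesis using j J by (auto simp: nth_list_update intro!: exI[of _ j])
    next
      case False
      then have "x \<in> {1..n}" using x by auto
      then obtain i where i: "i < k" "x \<in> Js!i" using J by blast
      have l: "length Js = k" using J by simp
      have "x \<in> Js[j := insert (Suc n) (Js!j)] ! i" using i l by (cases "i = j") auto
      then show ?thesis using i by blast
    qed
  qed
qed

lemma osp_decomp:
  assumes k: "k \<ge> 1"
  shows "ordered_set_partitions (Suc n) k =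
    (\<lambda>(Js,p). ins p {Suc n} Js) ` (ordered_set_partitions n (k - 1) \<times> {..<k}) \<union>
    (\<lambda>(Js,j). Js[j := insert (Suc n) (Js!j)]) ` (ordered_set_partitions n k \<times> {..<k})"
proof (rule set_eqI, rule iffI)
  fix Is assume Is: "Is \<in> ordered_set_partitions (Suc n) k"
  note I = Is[unfolded osp_iff]
  have "Suc n \<in> {1..Suc n}" by simp
  then obtain p where p: "p < k" "Suc n \<in> Is!p" using I by blast
  have uniq: "\<And>i. i < k \<Longrightarrow> i \<noteq> p \<Longrightarrow> Suc n \<notin> Is!i" using I p by blast
  show "Is \<in> (\<lambda>(Js,p). ins p {Suc n} Js) ` (ordered_set_partitions n (k - 1) \<times> {..<k}) \<union>
    (\<lambda>(Js,j). Js[j := insert (Suc n) (Js!j)]) ` (ordered_set_partitions n k \<times> {..<k})"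
  proof (cases "Is!p = {Suc n}")
    case True
    define Js where "Js = map (\<lambda>i. Is ! (if i < p then i else Suc i)) [0..<k-1]"
    have lenJ: "length Js = k - 1" by (simp add: Js_def)
    have nJ: "\<And>i. i < k - 1 \<Longrightarrow> Js!i = Is ! (if i < p then i else Suc i)" by (simp add: Js_def)
    have eq: "Is = ins p {Suc n} Js"
    proof (rule nth_equalityI)
      show "length Is = length (ins p {Suc n} Js)" using I lenJ p by simp
      fix i assume "i < length Is"
      then show "Is ! i = ins p {Suc n} Js ! i"
        using I lenJ p True nJ by (auto simp: nth_ins)
    qed
    have "Js \<in> ordered_set_partitions n (k - 1)"
      unfolding osp_iff
    proof (intro conjI allI impI ballI)
      show "length Js = k - 1" by (rule lenJ)
    next
      fix i assume "i < k - 1" then show "Js!i \<noteq> {}" using I nJ by auto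
    next
      fix i i' assume "i < k - 1" "i' < k - 1" "i \<noteq> i'"
      then show "Js!i \<inter> Js!i' = {}" using I nJ by auto
    next
      fix i assume i: "i < k - 1"
      define i' where "i' = (if i < p then i else Suc i)"
      have i': "i' \<noteq> p" "i' < k" using i by (auto simp: i'_def)
      have s1: "Is!i' \<subseteq> {1..Suc n}" using I i' by blast
      have s2: "Suc n \<notin> Is!i'" using uniq i' by blast
      have "Is!i' \<subseteq> {1..n}"
      proof
        fix x assume "x \<in> Is!i'"
        then have "x \<in> {1..Suc n}" "x \<noteq> Suc n" using s1 s2 by auto
        then show "x \<in> {1..n}" by auto
      qed
      then show "Js!i \<subseteq> {1..n}" using nJ[OF i] by (simp add: i'_def)
    next
      fix x assume x: "x \<in> {1..n}"
      then have "x \<in> {1..Suc n}" by auto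
      then obtain i where i: "i < k" "x \<in> Is!i" using I by blast
      have "i \<noteq> p"
      proof
        assume "i = p"
        then have "x = Suc n" using True i by simp
        then show False using x by simp
      qed
      show "\<exists>i<k - 1. x \<in> Js!i"
      proof (cases "i < p")
        case True then show ?thesis using i p nJ by (auto intro!: exI[of _ i])
      next
        case False
        then have "i - 1 < k - 1" "\<not> i - 1 < p" "Suc (i - 1) = i" using \<open>i \<noteq> p\<close> i by auto
        then have "Js!(i - 1) = Is!i" using nJ[of "i - 1"] by simp
        then show ?thesis using i \<open>i - 1 < k - 1\<close> by (intro exI[of _ "i - 1"]) simp
      qed
    qed
    then show ?thesis using eq p by (intro UnI1 image_eqI[where x="(Js,p)"]) auto
  next
    case False
    define Js where "Js = Is[p := Is!p - {Suc n}]"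
    have eq: "Is = Js[p := insert (Suc n) (Js!p)]"
      using p I by (simp add: Js_def insert_absorb)
    have "Js \<in> ordered_set_partitions n k"
      unfolding osp_iff
    proof (intro conjI allI impI ballI)
      show "length Js = k" using I by (simp add: Js_def)
    next
      fix i assume "i < k" then show "Js!i \<noteq> {}" using I False p by (auto simp: Js_def nth_list_update)
    next
      fix i i' assume ii: "i < k" "i' < k" "i \<noteq> i'"
      have sub: "\<And>i. Js!i \<subseteq> Is!i" using p I by (case_tac "i = p") (auto simp: Js_def)
      have "Is!i \<inter> Is!i' = {}" using I ii by blast
      then show "Js!i \<inter> Js!i' = {}" using sub[of i] sub[of i'] by blast
    next
      fix i assume i: "i < k"
      have "Js!i \<subseteq> Is!i - {Suc n}" using uniq[OF i] p I by (cases "i = p") (auto simp: Js_def)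
      moreover have "Is!i \<subseteq> {1..Suc n}" using I i by blast
      ultimately show "Js!i \<subseteq> {1..n}"
      proof (intro subsetI)
        fix x assume "Js!i \<subseteq> Is!i - {Suc n}" "Is!i \<subseteq> {1..Suc n}" "x \<in> Js!i"
        then have "x \<in> {1..Suc n}" "x \<noteq> Suc n" by auto
        then show "x \<in> {1..n}" by auto
      qed
    next
      fix x assume x: "x \<in> {1..n}"
      then have "x \<in> {1..Suc n}" by auto
      then obtain i where i: "i < k" "x \<in> Is!i" using I by blast
      have "x \<in> Js!i" using i x p I by (cases "i = p") (auto simp: Js_def)
      then show "\<exists>i<k. x \<in> Js!i" using i by blast
    qed
    then show ?thesis using eq p by (intro UnI2 image_eqI[where x="(Js,p)"]) auto
  qed
next
  fix Is assume "Is \<in> (\<lambda>(Js,p). ins p {Suc n} Js) ` (ordered_set_partitions n (k - 1) \<times> {..<k}) \<union>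
    (\<lambda>(Js,j). Js[j := insert (Suc n) (Js!j)]) ` (ordered_set_partitions n k \<times> {..<k})"
  then show "Is \<in> ordered_set_partitions (Suc n) k"
    using ins_in_osp upd_in_osp by auto
qed

lemma inj_ins: "inj_on (\<lambda>(Js,p). ins p {Suc n} Js) (ordered_set_partitions n (k - 1) \<times> {..<k})"
proof (rule inj_onI, clarify)
  fix Js p Js' p'
  assume Js: "Js \<in> ordered_set_partitions n (k - 1)" and p: "p < k"
    and Js': "Js' \<in> ordered_set_partitions n (k - 1)" and p': "p' < k"
    and e: "ins p {Suc n} Js = ins p' {Suc n} Js'"
  have l: "length Js = k - 1" "length Js' = k - 1" using Js Js' by (auto simp: osp_iff)
  have pl: "p \<le> length Js" "p' \<le> length Js'" using l p p' by auto
  have pp: "p = p'"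
  proof (rule ccontr)
    assume ne: "p \<noteq> p'"
    have h: "ins p {Suc n} Js ! p = {Suc n}" using pl by (simp add: nth_ins)
    have "Suc n \<in> ins p' {Suc n} Js' ! p" unfolding e[symmetric] h by simp
    moreover have "Suc n \<notin> ins p' {Suc n} Js' ! p"
    proof (cases "p < p'")
      case True then show ?thesis using pl osp_notin[OF Js', of p] p' l by (simp add: nth_ins)
    next
      case False
      then have "p - 1 < k - 1" using ne p by linarith
      then show ?thesis using pl osp_notin[OF Js', of "p - 1"] ne False by (simp add: nth_ins)
    qed
    ultimately show False by blast
  qed
  show "Js = Js' \<and> p = p'"
  proof
    show "Js = Js'"
    proof (rule nth_equalityI)
      show "length Js = length Js'" using l by simp
      fix i assume i: "i < length Js"
      show "Js!i = Js'!i"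
      proof (cases "i < p")
        case True
        then show ?thesis using arg_cong[OF e, of "\<lambda>L. L ! i"] pl pp by (simp add: nth_ins)
      next
        case False
        then show ?thesis using arg_cong[OF e, of "\<lambda>L. L ! Suc i"] pl pp by (simp add: nth_ins)
      qed
    qed
  qed (rule pp)
qed

lemma inj_upd: "inj_on (\<lambda>(Js,j). Js[j := insert (Suc n) (Js!j)]) (ordered_set_partitions n k \<times> {..<k})"
proof (rule inj_onI, clarify)
  fix Js j Js' j'
  assume Js: "Js \<in> ordered_set_partitions n k" and j: "j < k"
    and Js': "Js' \<in> ordered_set_partitions n k" and j': "j' < k"
    and e: "Js[j := insert (Suc n) (Js!j)] = Js'[j' := insert (Suc n) (Js'!j')]"
  have l: "length Js = k" "length Js' = k" using Js Js' by (auto simp: osp_iff)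
  have jj: "j = j'"
  proof (rule ccontr)
    assume ne: "j \<noteq> j'"
    have "Suc n \<in> Js'[j' := insert (Suc n) (Js'!j')] ! j" using e[symmetric] l j by simp
    then show False using ne osp_notin[OF Js' j] l j by simp
  qed
  show "Js = Js' \<and> j = j'"
  proof
    show "Js = Js'"
    proof (rule nth_equalityI)
      show "length Js = length Js'" using l by simp
      fix i assume i: "i < length Js"
      show "Js!i = Js'!i"
      proof (cases "i = j")
        case True
        have "insert (Suc n) (Js!j) = insert (Suc n) (Js'!j)"
          using arg_cong[OF e, of "\<lambda>L. L ! j"] l j jj by simp
        then show ?thesis using True osp_notin[OF Js j] osp_notin[OF Js' j] by (metis insert_ident)
      next
        case False
        then show ?thesis using arg_cong[OF e, of "\<lambda>L. L ! i"] jj by simp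
      qed
    qed
  qed (rule jj)
qed

lemma disj_ins_upd:
  "(\<lambda>(Js,p). ins p {Suc n} Js) ` (ordered_set_partitions n (k - 1) \<times> {..<k}) \<inter>
   (\<lambda>(Js,j). Js[j := insert (Suc n) (Js!j)]) ` (ordered_set_partitions n k \<times> {..<k}) = {}"
proof (rule equals0I, clarify)
  fix Js p Js' j
  assume Js: "Js \<in> ordered_set_partitions n (k - 1)" and p: "p < k"
    and Js': "Js' \<in> ordered_set_partitions n k" and j: "j < k"
    and e: "ins p {Suc n} Js = Js'[j := insert (Suc n) (Js'!j)]"
  have l: "length Js = k - 1" "length Js' = k" using Js Js' by (auto simp: osp_iff)
  have pl: "p \<le> length Js" using l p by auto
  have "Suc n \<in> ins p {Suc n} Js ! j" using e l j by simp
  then have jp: "j = p"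
  proof (cases "j < p")
    case True then show ?thesis using \<open>Suc n \<in> ins p {Suc n} Js ! j\<close> pl osp_notin[OF Js, of j] l by (simp add: nth_ins)
  next
    case False
    show ?thesis
    proof (rule ccontr)
      assume "j \<noteq> p"
      then have "j - 1 < k - 1" using False j by linarith
      then show False using \<open>Suc n \<in> ins p {Suc n} Js ! j\<close> pl osp_notin[OF Js, of "j - 1"] False \<open>j \<noteq> p\<close>
        by (simp add: nth_ins)
    qed
  qed
  have "{Suc n} = insert (Suc n) (Js'!j)" using arg_cong[OF e, of "\<lambda>L. L ! p"] pl jp l j by (simp add: nth_ins)
  moreover have "Js'!j \<noteq> {}" using Js' j by (auto simp: osp_iff)
  ultimately show False using osp_notin[OF Js' j] by auto
qed

lemma sum_osp_Suc:
  assumes "k \<ge> 1"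
  shows "(\<Sum>Is\<in>ordered_set_partitions (Suc n) k. F Is) =
    (\<Sum>(Js,p)\<in>ordered_set_partitions n (k - 1) \<times> {..<k}. F (ins p {Suc n} Js)) +
    (\<Sum>(Js,j)\<in>ordered_set_partitions n k \<times> {..<k}. F (Js[j := insert (Suc n) (Js!j)]))"
proof -
  have "(\<Sum>Is\<in>ordered_set_partitions (Suc n) k. F Is) =
     sum F ((\<lambda>(Js,p). ins p {Suc n} Js) ` (ordered_set_partitions n (k - 1) \<times> {..<k})) +
     sum F ((\<lambda>(Js,j). Js[j := insert (Suc n) (Js!j)]) ` (ordered_set_partitions n k \<times> {..<k}))"
    unfolding osp_decomp[OF assms]
    by (rule sum.union_disjoint[OF _ _ disj_ins_upd]) (auto simp: finite_osp)
  also have "\<dots> = (\<Sum>(Js,p)\<in>ordered_set_partitions n (k - 1) \<times> {..<k}. F (ins p {Suc n} Js)) +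
    (\<Sum>(Js,j)\<in>ordered_set_partitions n k \<times> {..<k}. F (Js[j := insert (Suc n) (Js!j)]))"
    by (simp only: sum.reindex[OF inj_ins] sum.reindex[OF inj_upd] comp_def prod.case_distrib)
  finally show ?thesis .
qed

lemma asum_upd_notin: "x \<notin> I \<Longrightarrow> asum (a(x := v)) I = asum a I"
  unfolding asum_def by (rule sum.cong) auto

lemma phi_notin: "x \<notin> I \<Longrightarrow> phi (a(x := v)) I = phi a I"
  by (rule ext) (simp add: phi_def asum_upd_notin)

lemma asum_upd_insert: "finite J \<Longrightarrow> x \<notin> J \<Longrightarrow> asum (a(x := v)) (insert x J) = v + asum a J"
proof -
  assume fin: "finite J" and x: "x \<notin> J"
  have "sum (a(x := v)) (insert x J) = (a(x := v)) x + sum (a(x := v)) J"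
    by (rule sum.insert[OF fin x])
  moreover have "sum (a(x := v)) J = sum a J" by (rule sum.cong) (use x in auto)
  ultimately show ?thesis by (simp add: asum_def)
qed

lemma prod_shift_odd:
  assumes "s \<ge> 1"
  shows "(\<Prod>i=1..s. of_nat (2 * Suc d + 1) - 2 * of_nat i :: rat)
       = (of_nat (2 * d) + 1) * (\<Prod>i=1..s - 1. of_nat (2 * d + 1) - 2 * of_nat i)"
proof -
  have "(\<Prod>i=1..s. of_nat (2 * Suc d + 1) - 2 * of_nat i :: rat)
      = (of_nat (2 * Suc d + 1) - 2 * of_nat (1::nat)) * (\<Prod>i=Suc 1..Suc (s - 1). of_nat (2 * Suc d + 1) - 2 * of_nat i)"
    using assms by (simp add: prod.atLeast_Suc_atMost)
  also have "(\<Prod>i=Suc 1..Suc (s - 1). of_nat (2 * Suc d + 1) - 2 * of_nat i :: rat)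
      = (\<Prod>i=1..s - 1. of_nat (2 * Suc d + 1) - 2 * of_nat (Suc i))"
    by (rule prod.shift_bounds_cl_Suc_ivl)
  also have "\<dots> = (\<Prod>i=1..s - 1. of_nat (2 * d + 1) - 2 * of_nat i)"
    by (rule prod.cong) (auto simp: algebra_simps)
  finally show ?thesis by (simp add: algebra_simps)
qed

lemma phi_block:
  assumes fin: "finite J" and ne: "J \<noteq> {}" and x: "x \<notin> J"
  shows "phi (a(x := 1)) (insert x J) 0 - phi (a(x := 0)) (insert x J) 0 = 0"
    and "phi (a(x := 1)) (insert x J) (Suc d) - phi (a(x := 0)) (insert x J) (Suc d)
         = phi a J d * (4 * of_nat (asum a J) + 3 - 2 * of_nat d)"
proof -
  have c: "card (insert x J) - 1 = card J" using fin x by simp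
  have s: "card J \<ge> 1" using fin ne by (simp add: Suc_leI card_gt_0_iff)
  show "phi (a(x := 1)) (insert x J) 0 - phi (a(x := 0)) (insert x J) 0 = 0"
    by (simp add: phi_def)
  define A where "A = asum a J"
  have "phi (a(x := 1)) (insert x J) (Suc d) - phi (a(x := 0)) (insert x J) (Suc d)
     = (of_nat ((2*A+1+2) choose (2*d+2)) - of_nat ((2*A+1) choose (2*d+2)))
       * (\<Prod>i=1..card J. of_nat (2 * Suc d + 1) - 2 * of_nat i)"
    unfolding phi_def c asum_upd_insert[OF fin x] A_def
    by (simp add: algebra_simps)
  also have "\<dots> = (of_nat ((2*A+1+2) choose (2*d+2)) - of_nat ((2*A+1) choose (2*d+2)))
       * (of_nat (2 * d) + 1) * (\<Prod>i=1..card J - 1. of_nat (2 * d + 1) - 2 * of_nat i)"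
    unfolding prod_shift_odd[OF s] by (simp add: mult.assoc)
  also have "\<dots> = of_nat ((2*A+1) choose (2*d)) * (2 * of_nat (2*A+1) - of_nat (2*d) + 1)
       * (\<Prod>i=1..card J - 1. of_nat (2 * d + 1) - 2 * of_nat i)"
    unfolding binom_key[of "2*A+1" "2*d"] ..
  also have "\<dots> = phi a J d * (4 * of_nat (asum a J) + 3 - 2 * of_nat d)"
    unfolding phi_def A_def by (simp add: algebra_simps)
  finally show "phi (a(x := 1)) (insert x J) (Suc d) - phi (a(x := 0)) (insert x J) (Suc d)
         = phi a J d * (4 * of_nat (asum a J) + 3 - 2 * of_nat d)" .
qed

lemma phi_single:
  shows "phi (a(x := 1)) {x} 0 - phi (a(x := 0)) {x} 0 = 0"
    and "phi (a(x := 1)) {x} (Suc d) - phi (a(x := 0)) {x} (Suc d) = (if d = 0 then 3 else 0)"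
proof -
  show "phi (a(x := 1)) {x} 0 - phi (a(x := 0)) {x} 0 = 0" by (simp add: phi_def)
  have "phi (a(x := 1)) {x} (Suc d) - phi (a(x := 0)) {x} (Suc d)
      = of_nat (3 choose (2 * Suc d)) - of_nat (1 choose (2 * Suc d))"
    by (simp add: phi_def asum_def)
  also have "\<dots> = (if d = 0 then 3 else 0)"
    by (cases d) (auto simp: binomial_eq_0 numeral_eq_Suc)
  finally show "phi (a(x := 1)) {x} (Suc d) - phi (a(x := 0)) {x} (Suc d) = (if d = 0 then 3 else 0)" .
qed

lemma asum_partition:
  assumes Js: "Js \<in> ordered_set_partitions n k"
  shows "(\<Sum>j<k. asum a (Js!j)) = asum a {1..n}"
proof -
  note J = Js[unfolded osp_iff]
  have U: "(\<Union>j\<in>{..<k}. Js!j) = {1..n}" using J by blast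
  have fin: "\<forall>j\<in>{..<k}. finite (Js!j)" using J by (meson finite_atLeastAtMost finite_subset lessThan_iff)
  show ?thesis
    unfolding asum_def U[symmetric]
    by (rule sum.UNION_disjoint[symmetric]) (use J fin in auto)
qed

lemma map_ins: "map f (ins p y L) = ins p (f y) (map f L)"
  by (simp add: ins_def take_map drop_map)

lemma ins_upd: "p \<le> length L \<Longrightarrow> (ins p z L)[p := y] = ins p y L"
  by (simp add: ins_def list_update_append)

lemma F_ins:
  assumes Js: "Js \<in> ordered_set_partitions n (k - 1)" and p: "p < k"
  shows "cv (map (phi (a(Suc n := 1))) (ins p {Suc n} Js)) (Suc D)
       - cv (map (phi (a(Suc n := 0))) (ins p {Suc n} Js)) (Suc D)
       = 3 * cv (map (phi a) Js) D"
proof -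
  define L where "L = map (phi a) Js"
  define u :: "nat \<Rightarrow> rat" where "u = (\<lambda>d. if d = 0 then 3 else 0)"
  have l: "length Js = k - 1" using Js by (simp add: osp_iff)
  have pl: "p \<le> length L" using l p by (simp add: L_def)
  have mv: "\<And>v. map (phi (a(Suc n := v))) Js = L"
    unfolding L_def
    by (rule map_cong[OF refl]) (metis in_set_conv_nth l osp_notin[OF Js] phi_notin)
  have e: "\<And>v. map (phi (a(Suc n := v))) (ins p {Suc n} Js) = (ins p u L)[p := phi (a(Suc n := v)) {Suc n}]"
    using mv pl by (simp add: map_ins ins_upd)
  have pl': "p < length (ins p u L)" using pl by simp
  have "cv (map (phi (a(Suc n := 1))) (ins p {Suc n} Js)) (Suc D)
       - cv (map (phi (a(Suc n := 0))) (ins p {Suc n} Js)) (Suc D)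
       = cv ((ins p u L)[p := (\<lambda>d. phi (a(Suc n := 1)) {Suc n} d - phi (a(Suc n := 0)) {Suc n} d)]) (Suc D)"
    unfolding e by (rule cv_upd_diff[OF pl'])
  also have "\<dots> = cv ((ins p u L)[p := u]) D"
    by (rule cv_shift[OF pl']) (use phi_single[of a "Suc n"] in \<open>auto simp: u_def\<close>)
  also have "\<dots> = cv (ins p u L) D" using pl by (simp add: ins_upd)
  also have "\<dots> = 3 * cv L D" unfolding u_def by (rule cv_ins_const[OF pl])
  finally show ?thesis by (simp add: L_def)
qed

lemma F_upd:
  assumes Js: "Js \<in> ordered_set_partitions n k" and j: "j < k"
  shows "cv (map (phi (a(Suc n := 1))) (Js[j := insert (Suc n) (Js!j)])) (Suc D)
       - cv (map (phi (a(Suc n := 0))) (Js[j := insert (Suc n) (Js!j)])) (Suc D)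
       = cv ((map (phi a) Js)[j := (\<lambda>d. (map (phi a) Js ! j) d * ((4 * of_nat (asum a (Js!j)) + 3) - 2 * of_nat d))]) D"
proof -
  define L where "L = map (phi a) Js"
  have l: "length Js = k" using Js by (simp add: osp_iff)
  have jl: "j < length L" using l j by (simp add: L_def)
  have mv: "\<And>v. map (phi (a(Suc n := v))) Js = L"
    unfolding L_def
    by (rule map_cong[OF refl]) (metis in_set_conv_nth l osp_notin[OF Js] phi_notin)
  have e: "\<And>v. map (phi (a(Suc n := v))) (Js[j := insert (Suc n) (Js!j)]) = L[j := phi (a(Suc n := v)) (insert (Suc n) (Js!j))]"
    using mv by (simp add: map_update)
  have fin: "finite (Js!j)" using osp_nth_sub[OF Js j] by (meson finite_atLeastAtMost finite_subset)
  have ne: "Js!j \<noteq> {}" using Js j by (simp add: osp_iff)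
  have x: "Suc n \<notin> Js!j" by (rule osp_notin[OF Js j])
  have "cv (map (phi (a(Suc n := 1))) (Js[j := insert (Suc n) (Js!j)])) (Suc D)
       - cv (map (phi (a(Suc n := 0))) (Js[j := insert (Suc n) (Js!j)])) (Suc D)
       = cv (L[j := (\<lambda>d. phi (a(Suc n := 1)) (insert (Suc n) (Js!j)) d - phi (a(Suc n := 0)) (insert (Suc n) (Js!j)) d)]) (Suc D)"
    unfolding e by (rule cv_upd_diff[OF jl])
  also have "\<dots> = cv (L[j := (\<lambda>d. phi a (Js!j) d * ((4 * of_nat (asum a (Js!j)) + 3) - 2 * of_nat d))]) D"
    by (rule cv_shift[OF jl]) (use phi_block[OF fin ne x] in auto)
  finally show ?thesis using jl l by (simp add: L_def)
qed

lemma T_step: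
  assumes k: "k \<ge> 1"
  shows "T (a(Suc n := 1)) (Suc n) k (Suc D) - T (a(Suc n := 0)) (Suc n) k (Suc D)
       = 3 * of_nat k * T a n (k - 1) D
         + T a n k D * (4 * of_nat (asum a {1..n}) + 3 * of_nat k - 2 * of_nat D)"
proof -
  define F where "F Is = cv (map (phi (a(Suc n := 1))) Is) (Suc D) - cv (map (phi (a(Suc n := 0))) Is) (Suc D)" for Is
  have "T (a(Suc n := 1)) (Suc n) k (Suc D) - T (a(Suc n := 0)) (Suc n) k (Suc D)
      = (\<Sum>Is\<in>ordered_set_partitions (Suc n) k. F Is)"
    by (simp add: T_def F_def sum_subtractf)
  also have "\<dots> = (\<Sum>(Js,p)\<in>ordered_set_partitions n (k - 1) \<times> {..<k}. F (ins p {Suc n} Js)) +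
    (\<Sum>(Js,j)\<in>ordered_set_partitions n k \<times> {..<k}. F (Js[j := insert (Suc n) (Js!j)]))"
    by (rule sum_osp_Suc[OF k])
  also have "(\<Sum>(Js,p)\<in>ordered_set_partitions n (k - 1) \<times> {..<k}. F (ins p {Suc n} Js))
      = (\<Sum>Js\<in>ordered_set_partitions n (k - 1). \<Sum>p<k. 3 * cv (map (phi a) Js) D)"
    unfolding sum.cartesian_product[symmetric]
  proof (intro sum.cong refl)
    fix Js p assume "Js \<in> ordered_set_partitions n (k - 1)" "p \<in> {..<k}"
    then show "F (ins p {Suc n} Js) = 3 * cv (map (phi a) Js) D"
      unfolding F_def using F_ins[of Js n k p a D] by simp
  qed
  also have "\<dots> = 3 * of_nat k * T a n (k - 1) D"
    by (simp add: T_def sum_distrib_left mult_ac)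
  also have "(\<Sum>(Js,j)\<in>ordered_set_partitions n k \<times> {..<k}. F (Js[j := insert (Suc n) (Js!j)]))
      = (\<Sum>Js\<in>ordered_set_partitions n k. \<Sum>j<length (map (phi a) Js).
           cv ((map (phi a) Js)[j := (\<lambda>d. (map (phi a) Js ! j) d * ((\<lambda>j. 4 * of_nat (asum a (Js!j)) + 3) j - 2 * of_nat d))]) D)"
    unfolding sum.cartesian_product[symmetric]
  proof (rule sum.cong[OF refl])
    fix Js assume Js: "Js \<in> ordered_set_partitions n k"
    then have l: "length (map (phi a) Js) = k" by (simp add: osp_iff)
    show "(\<Sum>j<k. F (Js[j := insert (Suc n) (Js!j)])) = (\<Sum>j<length (map (phi a) Js).
           cv ((map (phi a) Js)[j := (\<lambda>d. (map (phi a) Js ! j) d * ((\<lambda>j. 4 * of_nat (asum a (Js!j)) + 3) j - 2 * of_nat d))]) D)"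
      unfolding l
    proof (rule sum.cong[OF refl])
      fix j assume "j \<in> {..<k}"
      then have j: "j < k" by simp
      show "F (Js[j := insert (Suc n) (Js!j)]) =
           cv ((map (phi a) Js)[j := (\<lambda>d. (map (phi a) Js ! j) d * (4 * of_nat (asum a (Js!j)) + 3 - 2 * of_nat d))]) D"
        unfolding F_def using F_upd[OF Js j, of a D] by simp
    qed
  qed
  also have "\<dots> = (\<Sum>Js\<in>ordered_set_partitions n k. cv (map (phi a) Js) D
        * (4 * of_nat (asum a {1..n}) + 3 * of_nat k - 2 * of_nat D))"
  proof (intro sum.cong refl)
    fix Js assume Js: "Js \<in> ordered_set_partitions n k"
    then have l: "length (map (phi a) Js) = k" by (simp add: osp_iff)
    have s: "(\<Sum>j<k. (4 * of_nat (asum a (Js!j)) + 3 :: rat)) = 4 * of_nat (asum a {1..n}) + 3 * of_nat k"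
      using asum_partition[OF Js, of a]
      by (simp add: sum.distrib sum_distrib_left[symmetric] of_nat_sum[symmetric] del: of_nat_sum)
    show "(\<Sum>j<length (map (phi a) Js).
           cv ((map (phi a) Js)[j := (\<lambda>d. (map (phi a) Js ! j) d * ((\<lambda>j. 4 * of_nat (asum a (Js!j)) + 3) j - 2 * of_nat d))]) D)
        = cv (map (phi a) Js) D * (4 * of_nat (asum a {1..n}) + 3 * of_nat k - 2 * of_nat D)"
      using cv_weighted[of "map (phi a) Js" "\<lambda>j. 4 * of_nat (asum a (Js!j)) + 3" D, unfolded l s] l by simp
  qed
  also have "\<dots> = T a n k D * (4 * of_nat (asum a {1..n}) + 3 * of_nat k - 2 * of_nat D)"
    by (simp add: T_def sum_distrib_right)
  finally show ?thesis .
qed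

lemma osp_0: "n \<ge> 1 \<Longrightarrow> ordered_set_partitions n 0 = {}"
  by (auto simp: ordered_set_partitions_def)

lemma osp_big: "ordered_set_partitions n (Suc n) = {}"
proof (rule equals0I)
  fix Is assume Is: "Is \<in> ordered_set_partitions n (Suc n)"
  note I = Is[unfolded osp_iff]
  define f where "f i = (SOME x. x \<in> Is!i)" for i
  have f: "\<And>i. i < Suc n \<Longrightarrow> f i \<in> Is!i" unfolding f_def using I by (meson ex_in_conv someI_ex)
  have "inj_on f {..<Suc n}"
  proof (rule inj_onI)
    fix i j assume ij: "i \<in> {..<Suc n}" "j \<in> {..<Suc n}" "f i = f j"
    show "i = j"
    proof (rule ccontr)
      assume "i \<noteq> j"
      then have "Is!i \<inter> Is!j = {}" using I ij by auto
      moreover have "i < Suc n" "j < Suc n" using ij by auto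
      then have "f i \<in> Is!i" "f j \<in> Is!j" using f by blast+
      then have "f i \<in> Is!i" "f i \<in> Is!j" using ij(3) by simp_all
      ultimately show False by blast
    qed
  qed
  moreover have "f ` {..<Suc n} \<subseteq> {1..n}" using f I by blast
  ultimately have "card {..<Suc n} \<le> card {1..n}" by (meson card_inj_on_le finite_atLeastAtMost)
  then show False by simp
qed

lemma w_Suc: "g \<ge> 2 \<Longrightarrow> w g (Suc k) * (3 * of_nat (Suc k)) = - 3 * (2 * of_nat g - 2 + of_nat k) * w g k"
proof -
  assume g: "g \<ge> 2"
  have e: "2*g - 3 + Suc k = Suc (2*g - 3 + k)" by simp
  have e2: "of_nat (Suc (2*g - 3 + k)) = (2 * of_nat g - 2 + of_nat k :: rat)"
    using g by (simp add: of_nat_diff algebra_simps)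
  have f1: "(fact (2*g - 3 + Suc k) :: rat) = (2 * of_nat g - 2 + of_nat k) * fact (2*g - 3 + k)"
    unfolding e fact_Suc e2 ..
  have f2: "(fact (Suc k) :: rat) = of_nat (Suc k) * fact k" by (rule fact_Suc)
  have nz: "(fact k :: rat) \<noteq> 0" "(of_nat (Suc k) :: rat) \<noteq> 0" by simp_all
  show ?thesis
    unfolding w_def of_nat_fact f1 f2
    using nz by (simp add: field_simps del: of_nat_Suc)
qed

theorem proposition5p5:
  fixes g n :: nat and a :: "nat \<Rightarrow> nat"
  assumes "g \<ge> 2" and "n \<ge> 1"
  shows "P g (n + 1) (a(n + 1 := 1)) - P g (n + 1) (a(n + 1 := 0)) =
         P g n a * (4 * (\<Sum>i=1..n. of_nat (a i)) - 8 * of_nat g + 10 - 2 * of_nat n)"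
proof -
  define D where "D = g - 2 + n"
  define S :: rat where "S = of_nat (asum a {1..n})"
  have D1: "g - 2 + (n + 1) = Suc D" by (simp add: D_def)
  have np: "n + 1 = Suc n" by simp
  have Dr: "(of_nat D :: rat) = of_nat g - 2 + of_nat n" using assms by (simp add: D_def of_nat_diff)
  have S: "S = (\<Sum>i=1..n. of_nat (a i))" by (simp add: S_def asum_def)
  have "P g (n + 1) (a(n + 1 := 1)) - P g (n + 1) (a(n + 1 := 0))
     = (\<Sum>k=1..Suc n. w g k * (3 * of_nat k * T a n (k - 1) D + T a n k D * (4 * S + 3 * of_nat k - 2 * of_nat D)))"
    unfolding P_eq unfolding D1 unfolding np sum_subtractf[symmetric] right_diff_distrib[symmetric] S_def
    by (intro sum.cong refl) (use T_step[of _ a n D] in simp)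
  also have "\<dots> = (\<Sum>k=1..Suc n. w g k * (3 * of_nat k) * T a n (k - 1) D)
       + (\<Sum>k=1..Suc n. w g k * T a n k D * (4 * S + 3 * of_nat k - 2 * of_nat D))"
    by (simp add: sum.distrib[symmetric] algebra_simps)
  also have "(\<Sum>k=1..Suc n. w g k * (3 * of_nat k) * T a n (k - 1) D)
      = (\<Sum>k=0..n. w g (Suc k) * (3 * of_nat (Suc k)) * T a n k D)"
    using sum.shift_bounds_cl_Suc_ivl[of "\<lambda>k. w g k * (3 * of_nat k) * T a n (k - 1) D" 0 n] by simp
  also have "\<dots> = (\<Sum>k=1..n. w g (Suc k) * (3 * of_nat (Suc k)) * T a n k D)"
    using assms by (simp add: sum.atLeast_Suc_atMost T_def osp_0)
  also have "(\<Sum>k=1..Suc n. w g k * T a n k D * (4 * S + 3 * of_nat k - 2 * of_nat D))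
      = (\<Sum>k=1..n. w g k * T a n k D * (4 * S + 3 * of_nat k - 2 * of_nat D))"
    by (simp add: T_def osp_big)
  also have "(\<Sum>k=1..n. w g (Suc k) * (3 * of_nat (Suc k)) * T a n k D)
      + (\<Sum>k=1..n. w g k * T a n k D * (4 * S + 3 * of_nat k - 2 * of_nat D))
      = (\<Sum>k=1..n. w g k * T a n k D * (4 * S - 8 * of_nat g + 10 - 2 * of_nat n))"
    unfolding sum.distrib[symmetric]
  proof (intro sum.cong refl)
    fix k
    show "w g (Suc k) * (3 * of_nat (Suc k)) * T a n k D +
          w g k * T a n k D * (4 * S + 3 * of_nat k - 2 * of_nat D) =
          w g k * T a n k D * (4 * S - 8 * of_nat g + 10 - 2 * of_nat n)"
      unfolding w_Suc[OF assms(1)] Dr by (simp add: algebra_simps)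
  qed
  also have "\<dots> = P g n a * (4 * (\<Sum>i=1..n. of_nat (a i)) - 8 * of_nat g + 10 - 2 * of_nat n)"
    unfolding P_eq D_def S by (simp add: sum_distrib_right)
  finally show ?thesis .
qed

end
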